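(* If $q=1$, the unique optimal solution is the profile in which all users choose DP (i.e., $u_i=n_i$ and $v_i=0$ for all $i\in[m]$). If $q=0$, a pure strategy profile is optimal if and only if $|y_i-y_j|\le 1$ for all $i,j\in[m]$, where $y_i=u_i+v_i$.
   Context: Network model: there are $m\ge 2$ source nodes $s_1,\dots,s_m$ and one destination $d$. Source $s_i$ has a set $N_i$ of $n_i$ users. Each user generates an independent Poisson flow of packets of rate $\phi>0$; each direct link $(s_i,d)$ has service rate $\mu>0$; each sidelink loses packets independently with probability $q\in[0,1]$, and $\bar q=1-q$. A pure strategy of a user in $N_i$ is either the direct path (DP) $(s_i,d)$ or an indirect path (IP) $(s_i,s_j,d)$, $j\neq i$. For a pure profile, $u_i$ is the number of users of $N_i$ choosing DP and $v_i$ the number of users of other sources choosing an IP $(s_j,s_i,d)$. With $T_i=u_i\phi+v_i\bar q\phi$, the total traffic rate is $TR=\sum_i\frac{\mu T_i}{T_i+\mu}$; an optimal solution is a pure profile maximizing $TR$. *)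

theory Defs
  imports Complex_Main
begin

text \<open>Sources are indexed by 0..<m; source i has users 0..<n i.
  A pure profile is sigma :: nat => nat => nat: sigma i k is the source whose
  direct link user k of source i uses; sigma i k = i means the direct path (DP),
  sigma i k = j (j \<noteq> i) means the indirect path (s_i, s_j, d).\<close>

definition valid_profile :: "nat \<Rightarrow> (nat \<Rightarrow> nat) \<Rightarrow> (nat \<Rightarrow> nat \<Rightarrow> nat) \<Rightarrow> bool" where
  "valid_profile m n \<sigma> \<longleftrightarrow> (\<forall>i<m. \<forall>k<n i. \<sigma> i k < m)"

definition u_cnt :: "(nat \<Rightarrow> nat) \<Rightarrow> (nat \<Rightarrow> nat \<Rightarrow> nat) \<Rightarrow> nat \<Rightarrow> nat" where
  "u_cnt n \<sigma> i = card {k. k < n i \<and> \<sigma> i k = i}"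

definition v_cnt :: "nat \<Rightarrow> (nat \<Rightarrow> nat) \<Rightarrow> (nat \<Rightarrow> nat \<Rightarrow> nat) \<Rightarrow> nat \<Rightarrow> nat" where
  "v_cnt m n \<sigma> i = card {(j, k). j < m \<and> j \<noteq> i \<and> k < n j \<and> \<sigma> j k = i}"

definition load :: "real \<Rightarrow> real \<Rightarrow> nat \<Rightarrow> (nat \<Rightarrow> nat) \<Rightarrow> (nat \<Rightarrow> nat \<Rightarrow> nat) \<Rightarrow> nat \<Rightarrow> real" where
  "load q \<phi> m n \<sigma> i = real (u_cnt n \<sigma> i) * \<phi> + real (v_cnt m n \<sigma> i) * (1 - q) * \<phi>"

definition TR :: "real \<Rightarrow> real \<Rightarrow> real \<Rightarrow> nat \<Rightarrow> (nat \<Rightarrow> nat) \<Rightarrow> (nat \<Rightarrow> nat \<Rightarrow> nat) \<Rightarrow> real" where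
  "TR q \<phi> \<mu> m n \<sigma> = (\<Sum>i<m. \<mu> * load q \<phi> m n \<sigma> i / (load q \<phi> m n \<sigma> i + \<mu>))"

definition optimal :: "real \<Rightarrow> real \<Rightarrow> real \<Rightarrow> nat \<Rightarrow> (nat \<Rightarrow> nat) \<Rightarrow> (nat \<Rightarrow> nat \<Rightarrow> nat) \<Rightarrow> bool" where
  "optimal q \<phi> \<mu> m n \<sigma> \<longleftrightarrow> valid_profile m n \<sigma> \<and>
     (\<forall>\<tau>. valid_profile m n \<tau> \<longrightarrow> TR q \<phi> \<mu> m n \<tau> \<le> TR q \<phi> \<mu> m n \<sigma>)"

end

theory Submission imports Defs begin

definition gg :: "real \<Rightarrow> real \<Rightarrow> real \<Rightarrow> real" where
  "gg \<phi> \<mu> x = \<mu> * (x * \<phi>) / (x * \<phi> + \<mu>)"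

definition SS :: "nat \<Rightarrow> (nat \<Rightarrow> nat) \<Rightarrow> (nat \<Rightarrow> nat \<Rightarrow> nat) \<Rightarrow> nat \<Rightarrow> (nat \<times> nat) set" where
  "SS m n \<sigma> i = {(j, k). j < m \<and> k < n j \<and> \<sigma> j k = i}"

lemma finite_SS: "finite (SS m n \<sigma> i)"
proof -
  have "SS m n \<sigma> i \<subseteq> Sigma {..<m} (\<lambda>j. {..<n j})" by (auto simp: SS_def)
  thus ?thesis by (rule finite_subset) auto
qed

lemma uv_card:
  assumes "i < m"
  shows "u_cnt n \<sigma> i + v_cnt m n \<sigma> i = card (SS m n \<sigma> i)"
proof -
  let ?U = "{k. k < n i \<and> \<sigma> i k = i}"
  let ?V = "{(j, k). j < m \<and> j \<noteq> i \<and> k < n j \<and> \<sigma> j k = i}"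
  have eq: "SS m n \<sigma> i = (\<lambda>k. (i, k)) ` ?U \<union> ?V" using assms by (auto simp: SS_def)
  have fV: "finite ?V" using finite_SS[of m n \<sigma> i] by (rule finite_subset[rotated]) (auto simp: SS_def)
  have "card ((\<lambda>k. (i, k)) ` ?U \<union> ?V) = card ((\<lambda>k. (i, k)) ` ?U) + card ?V"
    by (rule card_Un_disjoint) (use fV in auto)
  also have "card ((\<lambda>k. (i, k)) ` ?U) = card ?U" by (rule card_image) (auto simp: inj_on_def)
  finally show ?thesis unfolding u_cnt_def v_cnt_def eq by simp
qed

lemma sum_SS:
  assumes "valid_profile m n \<sigma>"
  shows "(\<Sum>l<m. card (SS m n \<sigma> l)) = (\<Sum>j<m. n j)"
proof -
  have "(\<Union>l\<in>{..<m}. SS m n \<sigma> l) = Sigma {..<m} (\<lambda>j. {..<n j})"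
    using assms by (auto simp: SS_def valid_profile_def)
  hence "card (\<Union>l\<in>{..<m}. SS m n \<sigma> l) = (\<Sum>j<m. n j)" by simp
  moreover have "card (\<Union>l\<in>{..<m}. SS m n \<sigma> l) = (\<Sum>l<m. card (SS m n \<sigma> l))"
    by (rule card_UN_disjoint) (auto simp: finite_SS[unfolded SS_def] SS_def)
  ultimately show ?thesis by simp
qed

lemma TR0: "TR 0 \<phi> \<mu> m n \<sigma> = (\<Sum>l<m. gg \<phi> \<mu> (real (card (SS m n \<sigma> l))))"
  unfolding TR_def
  by (rule sum.cong) (auto simp: load_def gg_def uv_card[symmetric] algebra_simps)

lemma TR1: "TR 1 \<phi> \<mu> m n \<sigma> = (\<Sum>l<m. gg \<phi> \<mu> (real (u_cnt n \<sigma> l)))"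
  unfolding TR_def
  by (rule sum.cong) (auto simp: load_def gg_def)

lemma chord_id:
  fixes A t \<phi> \<mu> :: real
  assumes "A > 0" "A + t*\<phi> > 0" "A + \<phi> > 0"
  shows "(\<mu> - \<mu>^2/(A + t*\<phi>)) - ((\<mu> - \<mu>^2/A) + ((\<mu> - \<mu>^2/(A+\<phi>)) - (\<mu> - \<mu>^2/A)) * t)
     = - (\<mu>^2 * \<phi>^2 * (t * (t - 1))) / (A * (A + t*\<phi>) * (A + \<phi>))"
proof -
  have "A \<noteq> 0" "A + t*\<phi> \<noteq> 0" "A + \<phi> \<noteq> 0" using assms by auto
  then show ?thesis by (simp add: divide_simps power2_eq_square) (simp add: algebra_simps)
qed

lemma gg_alt:
  assumes "x * \<phi> + \<mu> > 0"
  shows "gg \<phi> \<mu> x = \<mu> - \<mu>^2 / (x * \<phi> + \<mu>)"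
  using assms unfolding gg_def by (simp add: field_simps power2_eq_square)

lemma chord:
  fixes a z :: nat
  assumes "\<phi> > 0" "\<mu> > 0"
  shows "gg \<phi> \<mu> z \<le> gg \<phi> \<mu> a + (gg \<phi> \<mu> (a+1) - gg \<phi> \<mu> a) * (real z - real a)"
proof -
  define A where "A = real a * \<phi> + \<mu>"
  define t where "t = real z - real a"
  have zA: "real z * \<phi> + \<mu> = A + t * \<phi>" unfolding A_def t_def by (simp add: algebra_simps)
  have aA: "real (a+1) * \<phi> + \<mu> = A + \<phi>" unfolding A_def by (simp add: algebra_simps)
  have p1: "A > 0" "A + t*\<phi> > 0" "A + \<phi> > 0"
  proof -
    have "0 \<le> real z * \<phi>" "0 \<le> real a * \<phi>" using assms by auto
    thus "A > 0" "A + t*\<phi> > 0" "A + \<phi> > 0" using assms zA[symmetric] unfolding A_def by linarith+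
  qed
  have e1: "gg \<phi> \<mu> z = \<mu> - \<mu>^2/(A + t*\<phi>)" using gg_alt[of z \<phi> \<mu>] p1 zA by simp
  have e2: "gg \<phi> \<mu> a = \<mu> - \<mu>^2/A" using gg_alt[of a \<phi> \<mu>] p1 unfolding A_def by simp
  have e3: "gg \<phi> \<mu> (real (a+1)) = \<mu> - \<mu>^2/(A+\<phi>)" using gg_alt[of "real (a+1)" \<phi> \<mu>] p1 aA by simp
  have "t * (t - 1) \<ge> 0"
  proof (cases "z \<le> a")
    case True thus ?thesis unfolding t_def by (intro mult_nonpos_nonpos) auto
  next
    case False thus ?thesis unfolding t_def by (intro mult_nonneg_nonneg) auto
  qed
  hence "\<mu>^2 * \<phi>^2 * (t * (t - 1)) \<ge> 0" by simp
  hence "- (\<mu>^2 * \<phi>^2 * (t * (t - 1))) / (A * (A + t*\<phi>) * (A + \<phi>)) \<le> 0"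
    using p1 by (intro divide_nonpos_pos) auto
  hence "gg \<phi> \<mu> z - (gg \<phi> \<mu> a + (gg \<phi> \<mu> (real (a+1)) - gg \<phi> \<mu> a) * t) \<le> 0"
    using chord_id[OF p1, of \<mu>] e1 e2 e3 by simp
  thus ?thesis unfolding t_def by simp
qed

lemma incr_eq:
  assumes "\<phi> > 0" "\<mu> > 0" "x \<ge> 0"
  shows "gg \<phi> \<mu> (x+1) - gg \<phi> \<mu> x = \<mu>^2 * \<phi> / ((x*\<phi>+\<mu>) * (x*\<phi>+\<phi>+\<mu>))"
proof -
  have "x*\<phi>+\<mu> > 0" "x*\<phi>+\<phi>+\<mu> > 0" using assms by (auto intro: add_nonneg_pos)
  thus ?thesis unfolding gg_def by (simp add: field_simps) (simp add: algebra_simps power2_eq_square)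
qed

lemma incr_pos:
  assumes "\<phi> > 0" "\<mu> > 0" "x \<ge> 0"
  shows "gg \<phi> \<mu> (x+1) - gg \<phi> \<mu> x > 0"
proof -
  have "x*\<phi>+\<mu> > 0" "x*\<phi>+\<phi>+\<mu> > 0" using assms by (auto intro: add_nonneg_pos)
  thus ?thesis using assms by (simp add: incr_eq)
qed

lemma incr_mono:
  assumes "\<phi> > 0" "\<mu> > 0" "x \<ge> 0" "x < y"
  shows "gg \<phi> \<mu> (y+1) - gg \<phi> \<mu> y < gg \<phi> \<mu> (x+1) - gg \<phi> \<mu> x"
proof -
  have a: "x*\<phi>+\<mu> > 0" "x*\<phi>+\<phi>+\<mu> > 0" using assms by (auto intro: add_nonneg_pos)
  have b: "x*\<phi> < y*\<phi>" using assms by simp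
  have c: "y*\<phi>+\<mu> > 0" "y*\<phi>+\<phi>+\<mu> > 0" using a b by linarith+
  have "(x*\<phi>+\<mu>) * (x*\<phi>+\<phi>+\<mu>) < (y*\<phi>+\<mu>) * (y*\<phi>+\<phi>+\<mu>)"
    using a b by (intro mult_strict_mono) auto
  hence "\<mu>^2 * \<phi> / ((y*\<phi>+\<mu>) * (y*\<phi>+\<phi>+\<mu>)) < \<mu>^2 * \<phi> / ((x*\<phi>+\<mu>) * (x*\<phi>+\<phi>+\<mu>))"
    using a c assms by (intro divide_strict_left_mono mult_pos_pos) auto
  thus ?thesis using assms by (simp add: incr_eq)
qed

lemma gg_mono:
  assumes "\<phi> > 0" "\<mu> > 0" "(a::nat) \<le> b"
  shows "gg \<phi> \<mu> a \<le> gg \<phi> \<mu> b"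
  using assms(3)
proof (induction b)
  case (Suc b)
  show ?case
  proof (cases "a = Suc b")
    case False
    hence "gg \<phi> \<mu> a \<le> gg \<phi> \<mu> b" using Suc by auto
    moreover have "gg \<phi> \<mu> (real b + 1) - gg \<phi> \<mu> b > 0" using incr_pos assms by auto
    ultimately show ?thesis by (simp add: add.commute)
  qed simp
qed simp

lemma sum_two:
  fixes f h :: "nat \<Rightarrow> real"
  assumes "i < m" "j < m" "i \<noteq> j" "\<And>l. l < m \<Longrightarrow> l \<noteq> i \<Longrightarrow> l \<noteq> j \<Longrightarrow> h l = f l"
  shows "(\<Sum>l<m. h l) = (\<Sum>l<m. f l) + (h i - f i) + (h j - f j)"
proof -
  have "(\<Sum>l<m. h l - f l) = (\<Sum>l\<in>{i,j}. h l - f l)"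
  proof -
    have X: "\<forall>l\<in>{..<m} - {i,j}. h l - f l = 0" using assms(4) by auto
    have Y: "{i,j} \<subseteq> {..<m}" using assms by auto
    show ?thesis using sum.mono_neutral_right[OF _ Y X] by simp
  qed
  thus ?thesis using assms(3) by (simp add: sum_subtractf)
qed

lemma sum_one:
  fixes f h :: "nat \<Rightarrow> real"
  assumes "i < m" "\<And>l. l < m \<Longrightarrow> l \<noteq> i \<Longrightarrow> h l = f l"
  shows "(\<Sum>l<m. h l) = (\<Sum>l<m. f l) + (h i - f i)"
proof -
  have "(\<Sum>l<m. h l - f l) = (\<Sum>l\<in>{i}. h l - f l)"
  proof -
    have X: "\<forall>l\<in>{..<m} - {i}. h l - f l = 0" using assms(2) by auto
    have Y: "{i} \<subseteq> {..<m}" using assms by auto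
    show ?thesis using sum.mono_neutral_right[OF _ Y X] by simp
  qed
  thus ?thesis by (simp add: sum_subtractf)
qed

definition mv :: "(nat \<Rightarrow> nat \<Rightarrow> nat) \<Rightarrow> nat \<Rightarrow> nat \<Rightarrow> nat \<Rightarrow> nat \<Rightarrow> nat \<Rightarrow> nat" where
  "mv \<sigma> j0 k0 t = \<sigma>(j0 := (\<sigma> j0)(k0 := t))"

lemma mv_apply: "mv \<sigma> j0 k0 t a b = (if a = j0 \<and> b = k0 then t else \<sigma> a b)"
  unfolding mv_def by auto

lemma valid_mv:
  assumes "valid_profile m n \<sigma>" "t < m"
  shows "valid_profile m n (mv \<sigma> j0 k0 t)"
  using assms unfolding valid_profile_def mv_def by auto

lemma SS_mv_src:
  assumes "(j0, k0) \<in> SS m n \<sigma> i" "t \<noteq> i"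
  shows "SS m n (mv \<sigma> j0 k0 t) i = SS m n \<sigma> i - {(j0, k0)}"
  using assms unfolding SS_def mv_apply by auto

lemma SS_mv_dst:
  assumes "(j0, k0) \<in> SS m n \<sigma> i"
  shows "SS m n (mv \<sigma> j0 k0 t) t = insert (j0, k0) (SS m n \<sigma> t)"
  using assms unfolding SS_def mv_apply by auto

lemma SS_mv_other:
  assumes "(j0, k0) \<in> SS m n \<sigma> i" "l \<noteq> i" "l \<noteq> t"
  shows "SS m n (mv \<sigma> j0 k0 t) l = SS m n \<sigma> l"
  using assms unfolding SS_def mv_def by auto

lemma u_mv_self:
  assumes "\<sigma> j0 k0 \<noteq> j0" "k0 < n j0"
  shows "u_cnt n (mv \<sigma> j0 k0 j0) j0 = Suc (u_cnt n \<sigma> j0)"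
proof -
  have "{k. k < n j0 \<and> mv \<sigma> j0 k0 j0 j0 k = j0} = insert k0 {k. k < n j0 \<and> \<sigma> j0 k = j0}"
    using assms unfolding mv_def by auto
  thus ?thesis unfolding u_cnt_def using assms by simp
qed

lemma u_mv_other:
  assumes "l \<noteq> j0"
  shows "u_cnt n (mv \<sigma> j0 k0 t) l = u_cnt n \<sigma> l"
  using assms unfolding u_cnt_def mv_def by simp

lemma u_le: "u_cnt n \<sigma> l \<le> n l"
proof -
  have "{k. k < n l \<and> \<sigma> l k = l} \<subseteq> {..<n l}" by auto
  hence "card {k. k < n l \<and> \<sigma> l k = l} \<le> card {..<n l}" by (intro card_mono) auto
  thus ?thesis unfolding u_cnt_def by simp
qed

lemma part1:
  assumes "\<phi> > 0" "\<mu> > 0" "valid_profile m n \<sigma>"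
  shows "optimal 1 \<phi> \<mu> m n \<sigma> \<longleftrightarrow> (\<forall>i<m. u_cnt n \<sigma> i = n i \<and> v_cnt m n \<sigma> i = 0)"
proof
  assume opt: "optimal 1 \<phi> \<mu> m n \<sigma>"
  have all: "\<sigma> j k = j" if "j < m" "k < n j" for j k
  proof (rule ccontr)
    assume ne: "\<sigma> j k \<noteq> j"
    let ?\<tau> = "mv \<sigma> j k j"
    have v: "valid_profile m n ?\<tau>" using valid_mv assms that by auto
    have "TR 1 \<phi> \<mu> m n ?\<tau> = TR 1 \<phi> \<mu> m n \<sigma> +
       (gg \<phi> \<mu> (real (u_cnt n ?\<tau> j)) - gg \<phi> \<mu> (real (u_cnt n \<sigma> j)))"
      unfolding TR1 by (rule sum_one) (use that u_mv_other in auto)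
    also have "u_cnt n ?\<tau> j = Suc (u_cnt n \<sigma> j)" using u_mv_self ne that by auto
    finally have "TR 1 \<phi> \<mu> m n ?\<tau> = TR 1 \<phi> \<mu> m n \<sigma> +
       (gg \<phi> \<mu> (real (u_cnt n \<sigma> j) + 1) - gg \<phi> \<mu> (real (u_cnt n \<sigma> j)))" by (simp add: add.commute)
    moreover have "gg \<phi> \<mu> (real (u_cnt n \<sigma> j) + 1) - gg \<phi> \<mu> (real (u_cnt n \<sigma> j)) > 0"
      using incr_pos assms by auto
    moreover have "TR 1 \<phi> \<mu> m n ?\<tau> \<le> TR 1 \<phi> \<mu> m n \<sigma>" using opt v unfolding optimal_def by auto
    ultimately show False by linarith
  qed
  show "\<forall>i<m. u_cnt n \<sigma> i = n i \<and> v_cnt m n \<sigma> i = 0"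
  proof (intro allI impI conjI)
    fix i assume i: "i < m"
    have "{k. k < n i \<and> \<sigma> i k = i} = {..<n i}" using all i by auto
    thus "u_cnt n \<sigma> i = n i" unfolding u_cnt_def by simp
    have E: "{(j, k). j < m \<and> j \<noteq> i \<and> k < n j \<and> \<sigma> j k = i} = {}" using all by auto
    show "v_cnt m n \<sigma> i = 0" unfolding v_cnt_def E by simp
  qed
next
  assume h: "\<forall>i<m. u_cnt n \<sigma> i = n i \<and> v_cnt m n \<sigma> i = 0"
  show "optimal 1 \<phi> \<mu> m n \<sigma>" unfolding optimal_def
  proof (intro conjI allI impI)
    fix \<tau> assume "valid_profile m n \<tau>"
    show "TR 1 \<phi> \<mu> m n \<tau> \<le> TR 1 \<phi> \<mu> m n \<sigma>" unfolding TR1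
      by (rule sum_mono) (use h u_le gg_mono assms in auto)
  qed (rule assms)
qed

lemma part2:
  assumes "\<phi> > 0" "\<mu> > 0" "valid_profile m n \<sigma>" "m \<ge> 2"
  shows "optimal 0 \<phi> \<mu> m n \<sigma> \<longleftrightarrow> (\<forall>i<m. \<forall>j<m. \<bar>int (u_cnt n \<sigma> i + v_cnt m n \<sigma> i)
                              - int (u_cnt n \<sigma> j + v_cnt m n \<sigma> j)\<bar> \<le> 1)"
proof -
  define y where "y = (\<lambda>\<tau> l. card (SS m n \<tau> l))"
  have cond: "(\<forall>i<m. \<forall>j<m. \<bar>int (u_cnt n \<sigma> i + v_cnt m n \<sigma> i)
                              - int (u_cnt n \<sigma> j + v_cnt m n \<sigma> j)\<bar> \<le> 1)
     \<longleftrightarrow> (\<forall>i<m. \<forall>j<m. y \<sigma> i \<le> y \<sigma> j + 1)"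
  proof -
    have e: "int (u_cnt n \<sigma> i + v_cnt m n \<sigma> i) = int (y \<sigma> i)" if "i < m" for i
      using uv_card[OF that] unfolding y_def by simp
    have "(\<forall>i<m. \<forall>j<m. \<bar>int (u_cnt n \<sigma> i + v_cnt m n \<sigma> i)
                              - int (u_cnt n \<sigma> j + v_cnt m n \<sigma> j)\<bar> \<le> 1)
       \<longleftrightarrow> (\<forall>i<m. \<forall>j<m. \<bar>int (y \<sigma> i) - int (y \<sigma> j)\<bar> \<le> 1)"
      using e by simp
    also have "\<dots> \<longleftrightarrow> (\<forall>i<m. \<forall>j<m. y \<sigma> i \<le> y \<sigma> j + 1)"
    proof
      assume "\<forall>i<m. \<forall>j<m. \<bar>int (y \<sigma> i) - int (y \<sigma> j)\<bar> \<le> 1"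
      hence h: "\<And>i j. i < m \<Longrightarrow> j < m \<Longrightarrow> \<bar>int (y \<sigma> i) - int (y \<sigma> j)\<bar> \<le> 1" by blast
      show "\<forall>i<m. \<forall>j<m. y \<sigma> i \<le> y \<sigma> j + 1"
      proof (intro allI impI)
        fix i j assume "i < m" "j < m"
        from h[OF this] show "y \<sigma> i \<le> y \<sigma> j + 1" by linarith
      qed
    next
      assume h: "\<forall>i<m. \<forall>j<m. y \<sigma> i \<le> y \<sigma> j + 1"
      show "\<forall>i<m. \<forall>j<m. \<bar>int (y \<sigma> i) - int (y \<sigma> j)\<bar> \<le> 1"
      proof (intro allI impI)
        fix i j assume "i < m" "j < m"
        with h have "y \<sigma> i \<le> y \<sigma> j + 1" "y \<sigma> j \<le> y \<sigma> i + 1" by auto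
        thus "\<bar>int (y \<sigma> i) - int (y \<sigma> j)\<bar> \<le> 1" by linarith
      qed
    qed
    finally show ?thesis .
  qed
  have TRy: "TR 0 \<phi> \<mu> m n \<tau> = (\<Sum>l<m. gg \<phi> \<mu> (real (y \<tau> l)))" for \<tau>
    unfolding TR0 y_def ..
  show ?thesis unfolding cond
  proof
    assume opt: "optimal 0 \<phi> \<mu> m n \<sigma>"
    show "\<forall>i<m. \<forall>j<m. y \<sigma> i \<le> y \<sigma> j + 1"
    proof (rule ccontr)
      assume "\<not> ?thesis"
      then obtain i j where ij: "i < m" "j < m" "y \<sigma> i \<ge> y \<sigma> j + 2" by force
      hence "i \<noteq> j" by auto
      have "SS m n \<sigma> i \<noteq> {}" using ij unfolding y_def by auto
      then obtain j0 k0 where p: "(j0, k0) \<in> SS m n \<sigma> i" by auto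
      let ?\<tau> = "mv \<sigma> j0 k0 j"
      have v: "valid_profile m n ?\<tau>" using valid_mv assms ij by auto
      have yi: "y ?\<tau> i = y \<sigma> i - 1" unfolding y_def
        using SS_mv_src[OF p \<open>i \<noteq> j\<close>[symmetric]] p finite_SS by simp
      have pj: "(j0, k0) \<notin> SS m n \<sigma> j" using p \<open>i \<noteq> j\<close> unfolding SS_def by auto
      have yj: "y ?\<tau> j = Suc (y \<sigma> j)" unfolding y_def
        using SS_mv_dst[OF p, of j] pj finite_SS by simp
      have TE: "TR 0 \<phi> \<mu> m n ?\<tau> = TR 0 \<phi> \<mu> m n \<sigma>
         + (gg \<phi> \<mu> (real (y ?\<tau> i)) - gg \<phi> \<mu> (real (y \<sigma> i)))
         + (gg \<phi> \<mu> (real (y ?\<tau> j)) - gg \<phi> \<mu> (real (y \<sigma> j)))"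
        unfolding TRy
      proof (rule sum_two)
        fix l assume "l < m" "l \<noteq> i" "l \<noteq> j"
        thus "gg \<phi> \<mu> (real (y ?\<tau> l)) = gg \<phi> \<mu> (real (y \<sigma> l))"
          using SS_mv_other[OF p] unfolding y_def by simp
      qed (use ij \<open>i \<noteq> j\<close> in auto)
      have R1: "real (y \<sigma> i) = real (y \<sigma> i - 1) + 1" using ij by auto
      have R2: "real (y ?\<tau> j) = real (y \<sigma> j) + 1" using yj by simp
      have R3: "real (y ?\<tau> i) = real (y \<sigma> i - 1)" using yi by simp
      have M: "gg \<phi> \<mu> (real (y \<sigma> i - 1) + 1) - gg \<phi> \<mu> (real (y \<sigma> i - 1))
          < gg \<phi> \<mu> (real (y \<sigma> j) + 1) - gg \<phi> \<mu> (real (y \<sigma> j))"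
        using ij by (intro incr_mono assms) auto
      have O: "TR 0 \<phi> \<mu> m n ?\<tau> \<le> TR 0 \<phi> \<mu> m n \<sigma>" using opt v unfolding optimal_def by auto
      have TE2: "TR 0 \<phi> \<mu> m n ?\<tau> = TR 0 \<phi> \<mu> m n \<sigma>
         + (gg \<phi> \<mu> (real (y \<sigma> i - 1)) - gg \<phi> \<mu> (real (y \<sigma> i - 1) + 1))
         + (gg \<phi> \<mu> (real (y \<sigma> j) + 1) - gg \<phi> \<mu> (real (y \<sigma> j)))"
        using TE unfolding R1 R2 R3 .
      show False using TE2 M O by linarith
    qed
  next
    assume bal: "\<forall>i<m. \<forall>j<m. y \<sigma> i \<le> y \<sigma> j + 1"
    define a where "a = Min (y \<sigma> ` {..<m})"
    have "0 \<in> {..<m}" using assms(4) by simp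
    hence ne: "{..<m} \<noteq> {}" by blast
    have aw: "\<exists>l<m. y \<sigma> l = a" 
    proof -
      have "a \<in> y \<sigma> ` {..<m}" unfolding a_def using ne by (intro Min_in) auto
      thus ?thesis by auto
    qed
    have ale: "a \<le> y \<sigma> l" if "l < m" for l unfolding a_def using that by auto
    have ya: "y \<sigma> l = a \<or> y \<sigma> l = a + 1" if "l < m" for l
    proof -
      obtain l0 where l0: "l0 < m" "y \<sigma> l0 = a" using aw by auto
      have "y \<sigma> l \<le> a + 1" using bal that l0 by auto
      thus ?thesis using ale[OF that] by linarith
    qed
    define s where "s = gg \<phi> \<mu> (real (a+1)) - gg \<phi> \<mu> (real a)"
    have lin: "(\<Sum>l<m. gg \<phi> \<mu> a + s * (real (z l) - real a)) =
        real m * gg \<phi> \<mu> a + s * real (\<Sum>l<m. z l) - real m * s * real a" for z :: "nat \<Rightarrow> nat"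
    proof -
      have "(\<Sum>l<m. gg \<phi> \<mu> a + s * (real (z l) - real a)) =
          (\<Sum>l<m. gg \<phi> \<mu> a) + s * (\<Sum>l<m. real (z l)) - (\<Sum>l<m. s * real a)"
        by (simp only: sum.distrib sum_subtractf sum_distrib_left right_diff_distrib)
      thus ?thesis by simp
    qed
    have sumy: "(\<Sum>l<m. y \<tau> l) = (\<Sum>j<m. n j)" if "valid_profile m n \<tau>" for \<tau>
      unfolding y_def using sum_SS[OF that] .
    show "optimal 0 \<phi> \<mu> m n \<sigma>" unfolding optimal_def
    proof (intro conjI allI impI)
      fix \<tau> assume vt: "valid_profile m n \<tau>"
      have "TR 0 \<phi> \<mu> m n \<tau> \<le> (\<Sum>l<m. gg \<phi> \<mu> a + s * (real (y \<tau> l) - real a))"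
        unfolding TRy s_def by (rule sum_mono) (rule chord[OF assms(1,2)])
      also have "\<dots> = (\<Sum>l<m. gg \<phi> \<mu> a + s * (real (y \<sigma> l) - real a))"
        unfolding lin sumy[OF vt] sumy[OF assms(3)] ..
      also have "\<dots> = TR 0 \<phi> \<mu> m n \<sigma>" unfolding TRy
      proof (rule sum.cong)
        fix l assume "l \<in> {..<m}"
        thus "gg \<phi> \<mu> a + s * (real (y \<sigma> l) - real a) = gg \<phi> \<mu> (real (y \<sigma> l))"
          using ya[of l] unfolding s_def by auto
      qed simp
      finally show "TR 0 \<phi> \<mu> m n \<tau> \<le> TR 0 \<phi> \<mu> m n \<sigma>" .
    qed (rule assms)
  qed
qed

theorem corollary1:
  fixes m :: nat and n :: "nat \<Rightarrow> nat" and \<phi> \<mu> :: real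
  assumes "m \<ge> 2" and "\<phi> > 0" and "\<mu> > 0"
  shows "(\<forall>\<sigma>. valid_profile m n \<sigma> \<longrightarrow>
            (optimal 1 \<phi> \<mu> m n \<sigma> \<longleftrightarrow>
               (\<forall>i<m. u_cnt n \<sigma> i = n i \<and> v_cnt m n \<sigma> i = 0)))
       \<and> (\<forall>\<sigma>. valid_profile m n \<sigma> \<longrightarrow>
            (optimal 0 \<phi> \<mu> m n \<sigma> \<longleftrightarrow>
               (\<forall>i<m. \<forall>j<m. \<bar>int (u_cnt n \<sigma> i + v_cnt m n \<sigma> i)
                              - int (u_cnt n \<sigma> j + v_cnt m n \<sigma> j)\<bar> \<le> 1)))"
proof (intro conjI allI impI)
  fix \<sigma> assume "valid_profile m n \<sigma>"
  thus "optimal 1 \<phi> \<mu> m n \<sigma> \<longleftrightarrow> (\<forall>i<m. u_cnt n \<sigma> i = n i \<and> v_cnt m n \<sigma> i = 0)"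
    using part1 assms(2,3) by blast
next
  fix \<sigma> assume "valid_profile m n \<sigma>"
  thus "optimal 0 \<phi> \<mu> m n \<sigma> \<longleftrightarrow> (\<forall>i<m. \<forall>j<m. \<bar>int (u_cnt n \<sigma> i + v_cnt m n \<sigma> i)
                              - int (u_cnt n \<sigma> j + v_cnt m n \<sigma> j)\<bar> \<le> 1)"
    using part2 assms by blast
qed

end
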